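(* Let $s\in(0,1/2)$, $a:=1-2s$, let $\mathcal{N}\subset\mathbb{R}^d$ be a compact smooth submanifold without boundary, and let $v\in H^1(B_1^+;\mathbb{R}^d,y^ad\mathbf{x})$ be such that $v(\mathbf{x})\in\mathcal{N}$ for a.e. $\mathbf{x}\in\partial^0B_1^+$. Setting $\bar v:=\frac{2}{\pi}\int_{B_1^+}v\,d\mathbf{x}$, one has $$d_{\mathcal{N}}(\bar v)\le C\big(\mathbf{E}_s(v,B_1^+)\big)^{1/2}$$ for some constant $C=C(s)$.
   Context: $B_1^+:=\{(x,y):x^2+y^2<1,\ y>0\}$, $\partial^0B_1^+:=(-1,1)\times\{0\}$. $H^1(B_1^+;\mathbb{R}^d,y^ad\mathbf{x})$ is the space of $v$ with $\int_{B_1^+}y^a(|v|^2+|\nabla v|^2)d\mathbf{x}<\infty$ (traces on $\partial^0B_1^+$ are well defined), $\mathbf{E}_s(v,B_1^+):=\frac12\int_{B_1^+}y^a|\nabla v|^2d\mathbf{x}$, and $d_{\mathcal{N}}(z):=\inf_{p\in\mathcal{N}}|z-p|$. *)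

theory Defs
  imports "HOL-Analysis.Analysis"
begin

fun Ck :: "nat \<Rightarrow> 'a::euclidean_space set \<Rightarrow> ('a \<Rightarrow> 'b::real_normed_vector) \<Rightarrow> bool" where
  "Ck 0 U f = continuous_on U f"
| "Ck (Suc k) U f = (\<exists>f'. (\<forall>x\<in>U. (f has_derivative f' x) (at x)) \<and>
                          (\<forall>i\<in>Basis. Ck k U (\<lambda>x. f' x i)))"

definition smooth_on :: "'a::euclidean_space set \<Rightarrow> ('a \<Rightarrow> 'b::real_normed_vector) \<Rightarrow> bool" where
  "smooth_on U f \<longleftrightarrow> open U \<and> (\<forall>k. Ck k U f)"

text \<open>Smooth embedded submanifold without boundary: locally straightened to a linear subspace
  by a smooth diffeomorphism of the ambient space.\<close>
definition smooth_submanifold :: "'e::euclidean_space set \<Rightarrow> bool" where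
  "smooth_submanifold N \<longleftrightarrow>
     (\<forall>p\<in>N. \<exists>U V (\<phi>::'e \<Rightarrow> 'e) (\<psi>::'e \<Rightarrow> 'e) L.
        open U \<and> p \<in> U \<and> open V \<and> smooth_on U \<phi> \<and> smooth_on V \<psi> \<and>
        \<phi> ` U = V \<and> (\<forall>x\<in>U. \<psi> (\<phi> x) = x) \<and> (\<forall>y\<in>V. \<phi> (\<psi> y) = y) \<and>
        subspace L \<and> \<phi> ` (N \<inter> U) = L \<inter> V)"

definition half_ball :: "(real \<times> real) set" where
  "half_ball = {p. (fst p)\<^sup>2 + (snd p)\<^sup>2 < 1 \<and> snd p > 0}"

definition dx :: "(real \<times> real \<Rightarrow> 'b::real_normed_vector) \<Rightarrow> real \<times> real \<Rightarrow> 'b" where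
  "dx f p = frechet_derivative f (at p) (1, 0)"
definition dy :: "(real \<times> real \<Rightarrow> 'b::real_normed_vector) \<Rightarrow> real \<times> real \<Rightarrow> 'b" where
  "dy f p = frechet_derivative f (at p) (0, 1)"

definition weighted_H1 :: "real \<Rightarrow> (real \<times> real \<Rightarrow> 'e::euclidean_space)
     \<Rightarrow> (real \<times> real \<Rightarrow> 'e) \<Rightarrow> (real \<times> real \<Rightarrow> 'e) \<Rightarrow> bool" where
  "weighted_H1 a v g1 g2 \<longleftrightarrow>
     set_borel_measurable lborel half_ball v \<and>
     set_borel_measurable lborel half_ball g1 \<and>
     set_borel_measurable lborel half_ball g2 \<and>
     (\<integral>\<^sup>+ p\<in>half_ball. ennreal (snd p powr a *
         ((norm (v p))\<^sup>2 + (norm (g1 p))\<^sup>2 + (norm (g2 p))\<^sup>2)) \<partial>lborel) < \<infinity> \<and>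
     (\<forall>\<phi>::real \<times> real \<Rightarrow> real.
        smooth_on UNIV \<phi> \<and> compact (closure {p. \<phi> p \<noteq> 0}) \<and>
        closure {p. \<phi> p \<noteq> 0} \<subseteq> half_ball \<longrightarrow>
        (LINT p:half_ball|lborel. dx \<phi> p *\<^sub>R v p) = - (LINT p:half_ball|lborel. \<phi> p *\<^sub>R g1 p) \<and>
        (LINT p:half_ball|lborel. dy \<phi> p *\<^sub>R v p) = - (LINT p:half_ball|lborel. \<phi> p *\<^sub>R g2 p))"

text \<open>T is the trace of v on the flat boundary (-1,1) x {0}: limit of boundary values of smooth
  functions converging to v in the weighted H^1 norm (definition of the trace operator by density).\<close>
definition has_trace :: "real \<Rightarrow> (real \<times> real \<Rightarrow> 'e::euclidean_space)
     \<Rightarrow> (real \<times> real \<Rightarrow> 'e) \<Rightarrow> (real \<times> real \<Rightarrow> 'e) \<Rightarrow> (real \<Rightarrow> 'e) \<Rightarrow> bool" where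
  "has_trace a v g1 g2 T \<longleftrightarrow>
     (\<exists>u :: nat \<Rightarrow> real \<times> real \<Rightarrow> 'e.
        (\<forall>n. smooth_on UNIV (u n)) \<and>
        ((\<lambda>n. \<integral>\<^sup>+ p\<in>half_ball. ennreal (snd p powr a *
            ((norm (u n p - v p))\<^sup>2 + (norm (dx (u n) p - g1 p))\<^sup>2 + (norm (dy (u n) p - g2 p))\<^sup>2))
            \<partial>lborel) \<longlonglongrightarrow> 0) \<and>
        ((\<lambda>n. \<integral>\<^sup>+ x\<in>{-1<..<1}. ennreal ((norm (u n (x, 0) - T x))\<^sup>2) \<partial>lborel) \<longlonglongrightarrow> 0))"

definition energy_s :: "real \<Rightarrow> (real \<times> real \<Rightarrow> 'e::euclidean_space) \<Rightarrow> (real \<times> real \<Rightarrow> 'e) \<Rightarrow> real" where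
  "energy_s a g1 g2 = 1/2 * (LINT p:half_ball|lborel. snd p powr a * ((norm (g1 p))\<^sup>2 + (norm (g2 p))\<^sup>2))"

end

theory Submission
  imports Defs
begin


lemma half_ball_alt: "half_ball = {p. (fst p)\<^sup>2 + (snd p)\<^sup>2 < 1} \<inter> {p. snd p > 0}"
  unfolding half_ball_def by auto

lemma open_half_ball: "open half_ball"
  unfolding half_ball_alt
  by (intro open_Int open_Collect_less continuous_intros)

lemma half_ball_sets[measurable]: "half_ball \<in> sets borel"
  using open_half_ball by auto

lemma half_ball_lborel[measurable]: "half_ball \<in> sets lborel"
  using open_half_ball by auto

lemma tonelli_fst:
  fixes f :: "real \<times> real \<Rightarrow> ennreal"
  assumes "f \<in> borel_measurable borel"
  shows "(\<integral>\<^sup>+ x. \<integral>\<^sup>+ y. f (x, y) \<partial>lborel \<partial>lborel) = (\<integral>\<^sup>+ p. f p \<partial>lborel)"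
proof -
  have "f \<in> borel_measurable (lborel \<Otimes>\<^sub>M lborel)"
    using assms by (simp add: lborel_prod)
  from lborel.nn_integral_fst[OF this] show ?thesis by (simp add: lborel_prod)
qed

lemma tonelli_snd:
  fixes f :: "real \<times> real \<Rightarrow> ennreal"
  assumes "f \<in> borel_measurable borel"
  shows "(\<integral>\<^sup>+ y. \<integral>\<^sup>+ x. f (x, y) \<partial>lborel \<partial>lborel) = (\<integral>\<^sup>+ p. f p \<partial>lborel)"
proof -
  have "f \<in> borel_measurable (lborel \<Otimes>\<^sub>M lborel)"
    using assms by (simp add: lborel_prod)
  from lborel_pair.nn_integral_snd[OF this] show ?thesis by (simp add: lborel_prod)
qed

lemma ennreal_half_aux: "ennreal pi = 2 * (X::ennreal) \<Longrightarrow> X = ennreal (pi/2)"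
proof (cases X rule: ennreal_cases)
  case (real r)
  assume h: "ennreal pi = 2 * X"
  have "ennreal pi = ennreal (2*r)" using h real by (simp add: ennreal_mult)
  then have "pi = 2*r" using real by (subst (asm) ennreal_inj) auto
  then show ?thesis using real by simp
next
  case top
  assume h: "ennreal pi = 2 * X"
  then show ?thesis using top by simp
qed

lemma emeasure_half_ball: "emeasure lborel half_ball = ennreal (pi/2)"
proof -
  define Hm where "Hm = {p::real\<times>real. (fst p)\<^sup>2 + (snd p)\<^sup>2 < 1 \<and> snd p < 0}"
  define L where "L = (UNIV::real set) \<times> {0::real}"
  have HmS[measurable]: "Hm \<in> sets borel" unfolding Hm_def
    by (intro borel_open open_Collect_conj open_Collect_less continuous_intros)
  have LS[measurable]: "L \<in> sets borel" unfolding L_def by (intro borel_closed closed_Times) auto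
  have ball_eq: "ball (0::real\<times>real) 1 = {p. (fst p)\<^sup>2 + (snd p)\<^sup>2 < 1}"
    by (auto simp: dist_norm norm_Pair prod_eq_iff)
  have "emeasure lborel (ball (0::real\<times>real) 1) = ennreal pi"
    using emeasure_ball[of 1 "0::real\<times>real"] by (simp add: unit_ball_vol_2)
  have L0: "emeasure lborel L = 0"
  proof -
    have "emeasure (lborel \<Otimes>\<^sub>M lborel) L = emeasure lborel (UNIV::real set) * emeasure lborel {0::real}"
      unfolding L_def by (rule lborel.emeasure_pair_measure_Times) auto
    then show ?thesis by (simp add: lborel_prod)
  qed
  have refl: "emeasure lborel Hm = emeasure lborel half_ball"
  proof -
    have "emeasure lborel Hm = (\<integral>\<^sup>+ p. indicator Hm p \<partial>lborel)" by simp
    also have "\<dots> = (\<integral>\<^sup>+ x. \<integral>\<^sup>+ y. indicator Hm (x, y) \<partial>lborel \<partial>lborel)"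
      by (rule tonelli_fst[symmetric]) simp
    also have "\<dots> = (\<integral>\<^sup>+ x. \<integral>\<^sup>+ y. indicator half_ball (x, y) \<partial>lborel \<partial>lborel)"
    proof (rule nn_integral_cong)
      fix x
      have "(\<integral>\<^sup>+ y. indicator half_ball (x, y) \<partial>lborel) =
            ennreal \<bar>-1\<bar> * (\<integral>\<^sup>+ y. indicator half_ball (x, 0 + (-1) * y) \<partial>lborel)"
        by (rule nn_integral_real_affine) auto
      also have "\<dots> = (\<integral>\<^sup>+ y. indicator Hm (x, y) \<partial>lborel)"
        by (simp, intro nn_integral_cong) (auto simp: indicator_def half_ball_def Hm_def)
      finally show "(\<integral>\<^sup>+ y. indicator Hm (x, y) \<partial>lborel) = (\<integral>\<^sup>+ y. indicator half_ball (x, y) \<partial>lborel)" by simp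
    qed
    also have "\<dots> = (\<integral>\<^sup>+ p. indicator half_ball p \<partial>lborel)"
      by (rule tonelli_fst) simp
    finally show ?thesis by simp
  qed
  have "emeasure lborel (ball (0::real\<times>real) 1) = (\<integral>\<^sup>+ p. indicator (ball (0::real\<times>real) 1) p \<partial>lborel)" by simp
  also have "\<dots> = (\<integral>\<^sup>+ p. indicator half_ball p + indicator Hm p + indicator L p \<partial>lborel)"
  proof (intro nn_integral_cong_AE)
    have "AE p in lborel. p \<notin> L" using L0 LS by (intro AE_not_in) auto
    then show "AE p in lborel. indicator (ball 0 1) p = (indicator half_ball p + indicator Hm p + indicator L p :: ennreal)"
      by eventually_elim (auto simp: ball_eq half_ball_def Hm_def L_def indicator_def linorder_neq_iff)
  qed
  also have "\<dots> = emeasure lborel half_ball + emeasure lborel Hm + emeasure lborel L"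
    by (simp add: nn_integral_add)
  finally have "ennreal pi = 2 * emeasure lborel half_ball"
    using \<open>emeasure lborel (ball (0::real\<times>real) 1) = ennreal pi\<close> refl L0 by (simp add: mult_2)
  then show ?thesis
    by (rule ennreal_half_aux)
qed

lemma measure_half_ball: "measure lborel half_ball = pi/2"
  using emeasure_half_ball by (simp add: measure_def)




lemma ftc_line:
  fixes u :: "real \<times> real \<Rightarrow> 'e::euclidean_space"
  assumes D: "\<And>p. (u has_derivative u' p) (at p)"
    and C: "continuous_on UNIV (\<lambda>p. u' p e)"
    and ab: "\<alpha> \<le> \<beta>"
  shows "ennreal (norm (u (a + \<beta> *\<^sub>R e) - u (a + \<alpha> *\<^sub>R e)))
         \<le> (\<integral>\<^sup>+ t. ennreal (norm (u' (a + t *\<^sub>R e) e)) * indicator {\<alpha>..\<beta>} t \<partial>lborel)"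
proof -
  define f where "f t = u (a + t *\<^sub>R e)" for t
  define f' where "f' t = u' (a + t *\<^sub>R e) e" for t
  have der: "(f has_vector_derivative f' t) (at t)" for t
  proof -
    have l: "((\<lambda>t. a + t *\<^sub>R e) has_derivative (\<lambda>h. h *\<^sub>R e)) (at t)"
      by (auto intro!: derivative_eq_intros)
    have "((\<lambda>t. u (a + t *\<^sub>R e)) has_derivative (\<lambda>h. u' (a + t *\<^sub>R e) (h *\<^sub>R e))) (at t)"
      using has_derivative_compose[OF l D] by (simp add: o_def)
    moreover have "u' (a + t *\<^sub>R e) (h *\<^sub>R e) = h *\<^sub>R u' (a + t *\<^sub>R e) e" for h
      using D[of "a + t *\<^sub>R e"] by (simp add: has_derivative_def linear_scale bounded_linear.linear)
    ultimately show ?thesis unfolding has_vector_derivative_def f_def f'_def by simp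
  qed
  have contf': "continuous_on UNIV f'"
    unfolding f'_def by (rule continuous_on_compose2[OF C]) (auto intro!: continuous_intros)
  have hi: "(f' has_integral f \<beta> - f \<alpha>) {\<alpha>..\<beta>}"
    using ab der by (intro fundamental_theorem_of_calculus) (auto intro: has_vector_derivative_at_within)
  have int2: "(\<lambda>t. norm (f' t)) integrable_on {\<alpha>..\<beta>}"
    by (intro integrable_continuous_interval continuous_on_norm continuous_on_subset[OF contf']) auto
  have "norm (f \<beta> - f \<alpha>) \<le> integral {\<alpha>..\<beta>} (\<lambda>t. norm (f' t))"
    using integral_norm_bound_integral[OF has_integral_integrable[OF hi] int2] hi
    by (simp add: integral_unique)
  moreover have "(\<integral>\<^sup>+ t. ennreal (indicator {\<alpha>..\<beta>} t * norm (f' t)) \<partial>lborel) = ennreal (integral {\<alpha>..\<beta>} (\<lambda>t. norm (f' t)))"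
    by (rule nn_integral_has_integral_lebesgue) (auto intro: integrable_integral[OF int2])
  ultimately show ?thesis
    unfolding f_def f'_def by (auto simp: indicator_mult_ennreal mult.commute intro: ennreal_leI)
qed




lemma sq_between: "\<alpha> \<le> \<xi> \<Longrightarrow> \<xi> \<le> \<beta> \<Longrightarrow> (\<xi>::real)\<^sup>2 \<le> max (\<alpha>\<^sup>2) (\<beta>\<^sup>2)"
  by (smt (verit, best) power2_minus power_mono)

locale c1fun =
  fixes u :: "real \<times> real \<Rightarrow> 'e::euclidean_space" and u' :: "real \<times> real \<Rightarrow> real \<times> real \<Rightarrow> 'e"
  assumes D: "\<And>p. (u has_derivative u' p) (at p)"
    and Cx: "continuous_on UNIV (\<lambda>p. u' p (1,0))"
    and Cy: "continuous_on UNIV (\<lambda>p. u' p (0,1))"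
begin

definition "gx p = norm (u' p (1,0))"
definition "gy p = norm (u' p (0,1))"
definition "Vy z = (\<integral>\<^sup>+ t. ennreal (gy (z,t)) * indicator half_ball (z,t) \<partial>lborel)"
definition "Hx t = (\<integral>\<^sup>+ \<xi>. ennreal (gx (\<xi>,t)) * indicator half_ball (\<xi>,t) \<partial>lborel)"

lemma gx_meas[measurable]: "gx \<in> borel_measurable borel"
  unfolding gx_def by (intro borel_measurable_continuous_onI continuous_on_norm Cx)
lemma gy_meas[measurable]: "gy \<in> borel_measurable borel"
  unfolding gy_def by (intro borel_measurable_continuous_onI continuous_on_norm Cy)

lemma cont_u: "continuous_on UNIV u"
  using D by (intro continuous_at_imp_continuous_on ballI) (blast intro: has_derivative_continuous)

lemma u_meas[measurable]: "u \<in> borel_measurable borel"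
  using cont_u by (rule borel_measurable_continuous_onI)

lemma Vy_meas[measurable]: "Vy \<in> borel_measurable borel"
proof -
  have "(\<lambda>(z,t). ennreal (gy (z,t)) * indicator half_ball (z,t)) \<in> borel_measurable (lborel \<Otimes>\<^sub>M lborel)"
    unfolding lborel_prod by (simp add: case_prod_beta')
  from lborel.borel_measurable_nn_integral[OF this] show ?thesis
    unfolding Vy_def[abs_def] by simp
qed

lemma swap_meas[measurable]: "(\<lambda>x::real\<times>real. (snd x, fst x)) \<in> borel_measurable borel"
  by (intro borel_measurable_continuous_onI continuous_intros)

lemma Hx_meas[measurable]: "Hx \<in> borel_measurable borel"
proof -
  have "(\<lambda>(t,\<xi>). ennreal (gx (\<xi>,t)) * indicator half_ball (\<xi>,t)) \<in> borel_measurable (lborel \<Otimes>\<^sub>M lborel)"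
    unfolding lborel_prod by (simp add: case_prod_beta')
  from lborel.borel_measurable_nn_integral[OF this] show ?thesis
    unfolding Hx_def[abs_def] by simp
qed

lemma vert:
  assumes "\<alpha> \<le> \<beta>"
  shows "ennreal (norm (u (z,\<beta>) - u (z,\<alpha>))) \<le> (\<integral>\<^sup>+ t. ennreal (gy (z,t)) * indicator {\<alpha>..\<beta>} t \<partial>lborel)"
  using ftc_line[OF D Cy assms, of "(z,0)"] by (simp add: gy_def)

lemma horiz:
  assumes "\<alpha> \<le> \<beta>"
  shows "ennreal (norm (u (\<beta>,t) - u (\<alpha>,t))) \<le> (\<integral>\<^sup>+ \<xi>. ennreal (gx (\<xi>,t)) * indicator {\<alpha>..\<beta>} \<xi> \<partial>lborel)"
  using ftc_line[OF D Cx assms, of "(0,t)"] by (simp add: gx_def)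

lemma pointwise:
  assumes p: "(x1, y) \<in> half_ball" and x: "\<bar>x\<bar> < 1/2"
  shows "ennreal (norm (u (x1,y) - u (x,0))) \<le> Vy x1 + Hx (y/2) + Vy x"
proof -
  have y: "0 < y" "x1\<^sup>2 + y\<^sup>2 < 1" using p by (auto simp: half_ball_def)
  have y2: "y\<^sup>2 < 1" using y(2) by (smt (verit) zero_le_power2)
  have y1: "y < 1"
    using y2 y(1) by (smt (verit) one_le_power)
  have y4: "(y/2)\<^sup>2 < 1/4" using y2 by (simp add: power_divide)
  have x2: "x\<^sup>2 < 1/4"
  proof -
    have "x\<^sup>2 = \<bar>x\<bar>\<^sup>2" by simp
    also have "\<dots> < (1/2)\<^sup>2" using x by (intro power_strict_mono) auto
    finally show ?thesis by (simp add: power2_eq_square)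
  qed
  have "ennreal (norm (u (x1,y) - u (x1,y/2))) \<le> (\<integral>\<^sup>+ t. ennreal (gy (x1,t)) * indicator {y/2..y} t \<partial>lborel)"
    using vert[of "y/2" y x1] y by simp
  also have "\<dots> \<le> Vy x1"
    unfolding Vy_def
  proof (intro nn_integral_mono)
    fix t
    have "t \<in> {y/2..y} \<Longrightarrow> (x1,t) \<in> half_ball"
    proof -
      assume t: "t \<in> {y/2..y}"
      then have "t\<^sup>2 \<le> y\<^sup>2" using y by (intro power_mono) auto
      then have "x1\<^sup>2 + t\<^sup>2 < 1" using y by linarith
      then show ?thesis using t y unfolding half_ball_def by auto
    qed
    then show "ennreal (gy (x1,t)) * indicator {y/2..y} t \<le> ennreal (gy (x1,t)) * indicator half_ball (x1,t)"
      by (auto simp: indicator_def)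
  qed
  finally have A: "ennreal (norm (u (x1,y) - u (x1,y/2))) \<le> Vy x1" .
  have hb: "(\<xi>, y/2) \<in> half_ball" if "min x1 x \<le> \<xi>" "\<xi> \<le> max x1 x" for \<xi>
  proof -
    have "\<xi>\<^sup>2 \<le> max ((min x1 x)\<^sup>2) ((max x1 x)\<^sup>2)" using that by (rule sq_between)
    also have "\<dots> \<le> max (x1\<^sup>2) (x\<^sup>2)" by (auto simp: min_def max_def)
    finally have m: "\<xi>\<^sup>2 \<le> max (x1\<^sup>2) (x\<^sup>2)" .
    have yy: "(y/2)\<^sup>2 \<le> y\<^sup>2" using y by (intro power_mono) auto
    have "\<xi>\<^sup>2 + (y/2)\<^sup>2 < 1"
    proof (cases "x1\<^sup>2 \<le> x\<^sup>2")
      case True then have "\<xi>\<^sup>2 \<le> x\<^sup>2" using m by (simp add: max_def)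
      then show ?thesis using y4 x2 by linarith
    next
      case False then have "\<xi>\<^sup>2 \<le> x1\<^sup>2" using m by (simp add: max_def)
      then show ?thesis using yy y by linarith
    qed
    then show ?thesis using y unfolding half_ball_def by auto
  qed
  have "ennreal (norm (u (x1,y/2) - u (x,y/2))) \<le> (\<integral>\<^sup>+ \<xi>. ennreal (gx (\<xi>,y/2)) * indicator {min x1 x..max x1 x} \<xi> \<partial>lborel)"
  proof (cases "x \<le> x1")
    case True
    then show ?thesis using horiz[of x x1 "y/2"] by (simp add: min_def max_def)
  next
    case False
    then show ?thesis using horiz[of x1 x "y/2"] by (simp add: min_def max_def norm_minus_commute)
  qed
  also have "\<dots> \<le> Hx (y/2)"
    unfolding Hx_def using hb by (intro nn_integral_mono) (auto simp: indicator_def)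
  finally have B: "ennreal (norm (u (x1,y/2) - u (x,y/2))) \<le> Hx (y/2)" .
  have "ennreal (norm (u (x,y/2) - u (x,0))) \<le> (\<integral>\<^sup>+ t. ennreal (gy (x,t)) * indicator {0..y/2} t \<partial>lborel)"
    using vert[of 0 "y/2" x] y by simp
  also have "\<dots> \<le> Vy x"
    unfolding Vy_def
  proof (intro nn_integral_mono_AE)
    have "AE t in lborel. t \<noteq> 0" by (rule AE_lborel_singleton)
    then show "AE t in lborel. ennreal (gy (x,t)) * indicator {0..y/2} t \<le> ennreal (gy (x,t)) * indicator half_ball (x,t)"
    proof eventually_elim
      case (elim t)
      have "t \<in> {0..y/2} \<Longrightarrow> (x,t) \<in> half_ball"
      proof -
        assume t: "t \<in> {0..y/2}"
        then have "t\<^sup>2 \<le> (y/2)\<^sup>2" by (intro power_mono) auto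
        then have "x\<^sup>2 + t\<^sup>2 < 1" using y4 x2 by linarith
        then show ?thesis using t elim unfolding half_ball_def by auto
      qed
      then show ?case by (auto simp: indicator_def)
    qed
  qed
  finally have C: "ennreal (norm (u (x,y/2) - u (x,0))) \<le> Vy x" .
  have "norm (u (x1,y) - u (x,0)) \<le> norm (u (x1,y) - u (x1,y/2)) + norm (u (x1,y/2) - u (x,y/2)) + norm (u (x,y/2) - u (x,0))"
    by (smt (verit) norm_triangle_ineq diff_add_cancel add_diff_eq)
  then have "ennreal (norm (u (x1,y) - u (x,0))) \<le> ennreal (norm (u (x1,y) - u (x1,y/2))) + ennreal (norm (u (x1,y/2) - u (x,y/2))) + ennreal (norm (u (x,y/2) - u (x,0)))"
    by (simp add: ennreal_plus[symmetric] del: ennreal_plus)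
  also have "\<dots> \<le> Vy x1 + Hx (y/2) + Vy x" using A B C by (intro add_mono) auto
  finally show ?thesis .
qed

end



lemma fst_meas[measurable]: "(fst::real\<times>real\<Rightarrow>real) \<in> borel_measurable borel"
  by (intro borel_measurable_continuous_onI continuous_intros)
lemma snd_meas[measurable]: "(snd::real\<times>real\<Rightarrow>real) \<in> borel_measurable borel"
  by (intro borel_measurable_continuous_onI continuous_intros)

context c1fun begin

definition "Gx = (\<integral>\<^sup>+ p. ennreal (gx p) * indicator half_ball p \<partial>lborel)"
definition "Gy = (\<integral>\<^sup>+ p. ennreal (gy p) * indicator half_ball p \<partial>lborel)"
definition "P1 = (\<integral>\<^sup>+ p. Vy (fst p) * indicator half_ball p \<partial>lborel)"
definition "P2 = (\<integral>\<^sup>+ p. Hx (snd p / 2) * indicator half_ball p \<partial>lborel)"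

lemma hb_bounds: "p \<in> half_ball \<Longrightarrow> 0 < snd p \<and> snd p < 1 \<and> -1 < fst p \<and> fst p < 1"
proof -
  assume "p \<in> half_ball"
  then have a: "(fst p)\<^sup>2 + (snd p)\<^sup>2 < 1" "snd p > 0" by (auto simp: half_ball_def)
  have "(snd p)\<^sup>2 < 1" "(fst p)\<^sup>2 < 1" using a by (smt (verit) zero_le_power2)+
  then have "\<bar>snd p\<bar> < 1" "\<bar>fst p\<bar> < 1" by (simp_all add: abs_square_less_1)
  then show ?thesis using a by auto
qed

lemma P1_le: "P1 \<le> Gy"
proof -
  have "P1 \<le> (\<integral>\<^sup>+ p. Vy (fst p) * indicator {0<..<1::real} (snd p) \<partial>lborel)"
    unfolding P1_def by (intro nn_integral_mono) (auto simp: indicator_def dest: hb_bounds)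
  also have "\<dots> = (\<integral>\<^sup>+ x. \<integral>\<^sup>+ y. Vy x * indicator {0<..<1::real} y \<partial>lborel \<partial>lborel)"
    using tonelli_fst[where f="\<lambda>p. Vy (fst p) * indicator {0<..<1::real} (snd p)"] by simp
  also have "\<dots> = (\<integral>\<^sup>+ x. Vy x \<partial>lborel)"
    by (simp add: nn_integral_cmult_indicator)
  also have "\<dots> = Gy" unfolding Vy_def Gy_def
    using tonelli_fst[where f="\<lambda>p. ennreal (gy p) * indicator half_ball p"] by simp
  finally show ?thesis .
qed

lemma P2_le: "P2 \<le> 4 * Gx"
proof -
  have "P2 \<le> (\<integral>\<^sup>+ p. Hx (snd p / 2) * indicator {0<..<1::real} (snd p) * indicator {-1<..<1::real} (fst p) \<partial>lborel)"
    unfolding P2_def by (intro nn_integral_mono) (auto simp: indicator_def dest: hb_bounds)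
  also have "\<dots> = (\<integral>\<^sup>+ y. \<integral>\<^sup>+ x. Hx (y/2) * indicator {0<..<1::real} y * indicator {-1<..<1::real} x \<partial>lborel \<partial>lborel)"
    using tonelli_snd[where f="\<lambda>p. Hx (snd p / 2) * indicator {0<..<1::real} (snd p) * indicator {-1<..<1::real} (fst p)"] by simp
  also have "\<dots> = (\<integral>\<^sup>+ y. Hx (y/2) * indicator {0<..<1::real} y * 2 \<partial>lborel)"
    by (intro nn_integral_cong) (simp add: nn_integral_cmult_indicator)
  also have "\<dots> = (\<integral>\<^sup>+ y. Hx (y/2) * indicator {0<..<1::real} y \<partial>lborel) * 2"
    by (rule nn_integral_multc) simp
  also have "(\<integral>\<^sup>+ y. Hx (y/2) * indicator {0<..<1::real} y \<partial>lborel)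
       = ennreal \<bar>2\<bar> * (\<integral>\<^sup>+ t. Hx ((0 + 2 * t)/2) * indicator {0<..<1::real} (0 + 2 * t) \<partial>lborel)"
    by (rule nn_integral_real_affine) auto
  also have "(\<integral>\<^sup>+ t. Hx ((0 + 2 * t)/2) * indicator {0<..<1::real} (0 + 2 * t) \<partial>lborel) \<le> (\<integral>\<^sup>+ t. Hx t \<partial>lborel)"
    by (intro nn_integral_mono) (auto simp: indicator_def)
  also have "(\<integral>\<^sup>+ t. Hx t \<partial>lborel) = Gx" unfolding Hx_def Gx_def
    using tonelli_snd[where f="\<lambda>p. ennreal (gx p) * indicator half_ball p"] by simp
  finally show ?thesis
    by (simp add: mult_ac) (blast intro: mult_right_mono zero_le)
qed

lemma Vy_I_le: "(\<integral>\<^sup>+ x. Vy x * indicator {-1/2<..<1/2} x \<partial>lborel) \<le> Gy"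
proof -
  have "(\<integral>\<^sup>+ x. Vy x * indicator {-1/2<..<1/2} x \<partial>lborel) \<le> (\<integral>\<^sup>+ x. Vy x \<partial>lborel)"
    by (intro nn_integral_mono) (auto simp: indicator_def)
  also have "\<dots> = Gy" unfolding Vy_def Gy_def
    using tonelli_fst[where f="\<lambda>p. ennreal (gy p) * indicator half_ball p"] by simp
  finally show ?thesis .
qed

end



lemma half_ball_sub_cball: "half_ball \<subseteq> cball (0::real\<times>real) 1"
proof
  fix p :: "real\<times>real" assume "p \<in> half_ball"
  then have "(fst p)\<^sup>2 + (snd p)\<^sup>2 < 1" by (auto simp: half_ball_def)
  moreover have "norm p = sqrt ((fst p)\<^sup>2 + (snd p)\<^sup>2)" by (cases p) (simp add: norm_Pair)
  ultimately have "norm p \<le> 1" by simp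
  then show "p \<in> cball 0 1" by simp
qed

lemma cont_set_integrable:
  fixes f :: "real\<times>real \<Rightarrow> 'e::euclidean_space"
  assumes "continuous_on UNIV f"
  shows "set_integrable lborel half_ball f"
proof -
  have "set_integrable lborel (cball 0 1) f"
    unfolding set_integrable_def
    by (rule borel_integrable_compact) (auto intro: continuous_on_subset[OF assms])
  then show ?thesis by (rule set_integrable_subset) (auto simp: half_ball_sub_cball)
qed

lemma set_integral_const_hb: "(LINT p:half_ball|lborel. (c::'e::euclidean_space)) = (pi/2) *\<^sub>R c"
proof -
  have "(LINT p:half_ball|lborel. c) = (LINT p|lborel. indicator half_ball p) *\<^sub>R c"
    unfolding set_lebesgue_integral_def
    by (rule integral_scaleR_left) (auto intro!: integrable_real_indicator simp: emeasure_half_ball)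
  also have "(LINT p|lborel. indicator half_ball p) = measure lborel half_ball"
    using Bochner_Integration.integral_indicator[of lborel half_ball] by simp
  finally show ?thesis by (simp add: measure_half_ball)
qed

context c1fun begin

lemma mean_bound:
  assumes x: "\<bar>x\<bar> < 1/2"
  shows "ennreal (norm ((2/pi) *\<^sub>R (LINT p:half_ball|lborel. u p) - u (x,0))) \<le> P1 + P2 + Vy x"
proof -
  define c where "c = u (x,0)"
  have iu: "set_integrable lborel half_ball u" by (rule cont_set_integrable[OF cont_u])
  have ic: "set_integrable lborel half_ball (\<lambda>p. c)" by (rule cont_set_integrable) simp
  have idf: "set_integrable lborel half_ball (\<lambda>p. u p - c)" using iu ic by (rule set_integral_diff)
  have "(2/pi) *\<^sub>R (LINT p:half_ball|lborel. u p) - c = (2/pi) *\<^sub>R (LINT p:half_ball|lborel. u p - c)"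
    by (simp add: set_integral_diff[OF iu ic] set_integral_const_hb scaleR_diff_right)
  then have nA: "norm ((2/pi) *\<^sub>R (LINT p:half_ball|lborel. u p) - c) = (2/pi) * norm (LINT p:half_ball|lborel. u p - c)"
    by simp
  have nB: "norm (LINT p:half_ball|lborel. u p - c) \<le> (LINT p|lborel. norm (indicator half_ball p *\<^sub>R (u p - c)))"
    unfolding set_lebesgue_integral_def by (rule integral_norm_bound)
  have n1: "norm ((2/pi) *\<^sub>R (LINT p:half_ball|lborel. u p) - c) \<le> (2/pi) * (LINT p|lborel. norm (indicator half_ball p *\<^sub>R (u p - c)))"
    unfolding nA by (rule mult_left_mono[OF nB]) simp
  have e1: "ennreal (LINT p|lborel. norm (indicator half_ball p *\<^sub>R (u p - c))) = (\<integral>\<^sup>+ p. ennreal (norm (indicator half_ball p *\<^sub>R (u p - c))) \<partial>lborel)"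
    using integrable_norm[OF idf[unfolded set_integrable_def]] by (intro nn_integral_eq_integral[symmetric]) auto
  also have "\<dots> = (\<integral>\<^sup>+ p. ennreal (norm (u p - c)) * indicator half_ball p \<partial>lborel)"
    by (intro nn_integral_cong) (auto simp: indicator_def)
  also have "\<dots> \<le> (\<integral>\<^sup>+ p. (Vy (fst p) + Hx (snd p / 2) + Vy x) * indicator half_ball p \<partial>lborel)"
  proof (intro nn_integral_mono)
    fix p :: "real \<times> real"
    show "ennreal (norm (u p - c)) * indicator half_ball p \<le> (Vy (fst p) + Hx (snd p / 2) + Vy x) * indicator half_ball p"
    proof (cases "p \<in> half_ball")
      case True
      then have "(fst p, snd p) \<in> half_ball" by simp
      from pointwise[OF this x] True show ?thesis by (simp add: c_def)
    qed simp
  qed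
  also have "\<dots> = P1 + P2 + Vy x * emeasure lborel half_ball"
    unfolding P1_def P2_def
    by (simp add: distrib_right nn_integral_add nn_integral_cmult_indicator)
  finally have e2: "ennreal (LINT p|lborel. norm (indicator half_ball p *\<^sub>R (u p - c))) \<le> P1 + P2 + Vy x * ennreal (pi/2)"
    by (simp add: emeasure_half_ball)
  have "ennreal (norm ((2/pi) *\<^sub>R (LINT p:half_ball|lborel. u p) - c)) \<le> ennreal ((2/pi) * (LINT p|lborel. norm (indicator half_ball p *\<^sub>R (u p - c))))"
    using n1 by (rule ennreal_leI)
  also have "\<dots> = ennreal (2/pi) * ennreal (LINT p|lborel. norm (indicator half_ball p *\<^sub>R (u p - c)))"
    by (rule ennreal_mult) (auto intro!: integral_nonneg)
  also have "\<dots> \<le> ennreal (2/pi) * (P1 + P2 + Vy x * ennreal (pi/2))"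
    using e2 by (rule mult_left_mono) simp
  also have "\<dots> = ennreal (2/pi) * (P1 + P2) + Vy x * (ennreal (2/pi) * ennreal (pi/2))"
    by (simp add: distrib_left mult_ac)
  also have "ennreal (2/pi) * ennreal (pi/2) = 1"
    by (simp add: ennreal_mult[symmetric])
  also have "ennreal (2/pi) * (P1 + P2) \<le> 1 * (P1 + P2)"
    by (intro mult_right_mono) (auto simp: pi_ge_two)
  finally show ?thesis by (simp add: c_def)
qed

lemma core:
  "(\<integral>\<^sup>+ x. ennreal (norm ((2/pi) *\<^sub>R (LINT p:half_ball|lborel. u p) - u (x,0))) * indicator {-1/2<..<1/2} x \<partial>lborel)
     \<le> 4 * (\<integral>\<^sup>+ p. ennreal (gx p + gy p) * indicator half_ball p \<partial>lborel)"
proof -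
  have "(\<integral>\<^sup>+ x. ennreal (norm ((2/pi) *\<^sub>R (LINT p:half_ball|lborel. u p) - u (x,0))) * indicator {-1/2<..<1/2} x \<partial>lborel)
     \<le> (\<integral>\<^sup>+ x. (P1 + P2 + Vy x) * indicator {-1/2<..<1/2} x \<partial>lborel)"
  proof (intro nn_integral_mono)
    fix x :: real
    show "ennreal (norm ((2/pi) *\<^sub>R (LINT p:half_ball|lborel. u p) - u (x,0))) * indicator {-1/2<..<1/2} x
          \<le> (P1 + P2 + Vy x) * indicator {-1/2<..<1/2} x"
    proof (cases "x \<in> {-1/2<..<1/2}")
      case True
      then have "\<bar>x\<bar> < 1/2" by auto
      from mean_bound[OF this] True show ?thesis by simp
    qed simp
  qed
  also have "\<dots> = (P1 + P2) * emeasure lborel {-1/2<..<1/2::real} + (\<integral>\<^sup>+ x. Vy x * indicator {-1/2<..<1/2} x \<partial>lborel)"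
    by (simp add: distrib_right nn_integral_add nn_integral_cmult_indicator)
  also have "emeasure lborel {-1/2<..<1/2::real} = 1" by simp
  also have "(P1 + P2) * 1 + (\<integral>\<^sup>+ x. Vy x * indicator {-1/2<..<1/2} x \<partial>lborel) \<le> Gy + 4 * Gx + Gy"
    using P1_le P2_le Vy_I_le by (simp add: add_mono)
  also have "\<dots> \<le> 4 * (Gx + Gy)"
  proof -
    have "Gy + 4 * Gx + Gy = 4 * Gx + 2 * Gy" by (simp add: mult_2 add_ac)
    also have "\<dots> \<le> 4 * Gx + 4 * Gy" by (intro add_left_mono mult_right_mono) auto
    finally show ?thesis by (simp add: distrib_left)
  qed
  also have "Gx + Gy = (\<integral>\<^sup>+ p. ennreal (gx p + gy p) * indicator half_ball p \<partial>lborel)"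
  proof -
    have "(\<integral>\<^sup>+ p. ennreal (gx p + gy p) * indicator half_ball p \<partial>lborel)
        = (\<integral>\<^sup>+ p. ennreal (gx p) * indicator half_ball p + ennreal (gy p) * indicator half_ball p \<partial>lborel)"
      by (intro nn_integral_cong) (simp add: gx_def gy_def ennreal_plus distrib_right)
    also have "\<dots> = Gx + Gy" unfolding Gx_def Gy_def by (rule nn_integral_add) simp_all
    finally show ?thesis by simp
  qed
  finally show ?thesis .
qed

end



lemma amgm: fixes w e z :: real assumes "0 < w" "0 < e" shows "z \<le> w*z\<^sup>2/(2*e) + e/(2*w)"
proof -
  have "0 \<le> (w*z - e)\<^sup>2" by simp
  then have "2*w*e*z \<le> w\<^sup>2*z\<^sup>2 + e\<^sup>2" by (simp add: power2_eq_square algebra_simps)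
  then have "z \<le> (w\<^sup>2*z\<^sup>2 + e\<^sup>2)/(2*w*e)" using assms by (simp add: field_simps)
  also have "\<dots> = w*z\<^sup>2/(2*e) + e/(2*w)" using assms by (simp add: field_simps power2_eq_square)
  finally show ?thesis .
qed

lemma pw_A:
  fixes x :: "'e::real_normed_vector" and w e A B :: real
  assumes "0 < w" "0 < e" "0 \<le> A" "0 \<le> B"
  shows "norm x \<le> (1/(2*e)) * (w * ((norm x)\<^sup>2 + A + B)) + (e/2) * (1/w)"
proof -
  have "norm x \<le> w*(norm x)\<^sup>2/(2*e) + e/(2*w)" by (rule amgm[OF assms(1,2)])
  also have "w*(norm x)\<^sup>2/(2*e) \<le> (1/(2*e)) * (w * ((norm x)\<^sup>2 + A + B))"
    using assms by (simp add: field_simps)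
  also have "e/(2*w) = (e/2) * (1/w)" by simp
  finally show ?thesis by simp
qed

lemma pw_G:
  fixes p1 p2 q1 q2 r :: "'e::real_normed_vector" and w e :: real
  assumes "0 < w" "0 < e"
  shows "norm p1 + norm p2 \<le> (1/(2*e)) * (w * ((norm q1)\<^sup>2 + (norm q2)\<^sup>2))
           + (1/(2*e)) * (w * ((norm r)\<^sup>2 + (norm (p1 - q1))\<^sup>2 + (norm (p2 - q2))\<^sup>2)) + (2*e) * (1/w)"
proof -
  have t: "norm p1 + norm p2 \<le> norm q1 + norm (p1 - q1) + norm q2 + norm (p2 - q2)"
    using norm_triangle_ineq[of q1 "p1 - q1"] norm_triangle_ineq[of q2 "p2 - q2"] by simp
  have a1: "norm q1 \<le> w*(norm q1)\<^sup>2/(2*e) + e/(2*w)" by (rule amgm[OF assms])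
  have a2: "norm q2 \<le> w*(norm q2)\<^sup>2/(2*e) + e/(2*w)" by (rule amgm[OF assms])
  have a3: "norm (p1-q1) \<le> w*(norm (p1-q1))\<^sup>2/(2*e) + e/(2*w)" by (rule amgm[OF assms])
  have a4: "norm (p2-q2) \<le> w*(norm (p2-q2))\<^sup>2/(2*e) + e/(2*w)" by (rule amgm[OF assms])
  have r: "0 \<le> (1/(2*e)) * (w * (norm r)\<^sup>2)" using assms by simp
  have "w*(norm q1)\<^sup>2/(2*e) + e/(2*w) + (w*(norm q2)\<^sup>2/(2*e) + e/(2*w)) + (w*(norm (p1-q1))\<^sup>2/(2*e) + e/(2*w))
      + (w*(norm (p2-q2))\<^sup>2/(2*e) + e/(2*w)) + (1/(2*e)) * (w * (norm r)\<^sup>2)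
      = (1/(2*e)) * (w * ((norm q1)\<^sup>2 + (norm q2)\<^sup>2))
           + (1/(2*e)) * (w * ((norm r)\<^sup>2 + (norm (p1 - q1))\<^sup>2 + (norm (p2 - q2))\<^sup>2)) + (2*e) * (1/w)"
    using assms by (simp add: field_simps)
  then show ?thesis using t a1 a2 a3 a4 r by linarith
qed

lemma smooth_c1:
  fixes f :: "real\<times>real \<Rightarrow> 'e::euclidean_space"
  assumes "smooth_on UNIV f"
  obtains f' where "c1fun f f'" "\<And>p. dx f p = f' p (1,0)" "\<And>p. dy f p = f' p (0,1)"
proof -
  from assms have "Ck (Suc 0) UNIV f" unfolding smooth_on_def by blast
  then obtain f' where d: "\<forall>x\<in>UNIV. (f has_derivative f' x) (at x)" and c: "\<forall>i\<in>Basis. Ck 0 UNIV (\<lambda>x. f' x i)"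
    by auto
  have b: "(1::real,0::real) \<in> Basis" "(0::real,1::real) \<in> Basis" by (auto simp: Basis_prod_def)
  have "c1fun f f'" using d c b by unfold_locales auto
  moreover have "frechet_derivative f (at p) = f' p" for p
    by (rule frechet_derivative_at[symmetric]) (rule d[rule_format, OF UNIV_I])
  ultimately show ?thesis using that by (simp add: dx_def dy_def)
qed

lemma hb_bnds: "p \<in> half_ball \<Longrightarrow> 0 < snd p \<and> snd p < 1 \<and> -1 < fst p \<and> fst p < 1"
proof -
  assume "p \<in> half_ball"
  then have a: "(fst p)\<^sup>2 + (snd p)\<^sup>2 < 1" "snd p > 0" by (auto simp: half_ball_def)
  have "(snd p)\<^sup>2 < 1" "(fst p)\<^sup>2 < 1" using a by (smt (verit) zero_le_power2)+
  then have "\<bar>snd p\<bar> < 1" "\<bar>fst p\<bar> < 1" by (simp_all add: abs_square_less_1)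
  then show ?thesis using a by auto
qed

lemma weight_int:
  assumes a: "0 < a" "a < 1"
  shows "(\<integral>\<^sup>+ p. ennreal (snd p powr (-a)) * indicator half_ball p \<partial>lborel) \<le> ennreal (2/(1-a))"
proof -
  have inner: "(\<integral>\<^sup>+ y. ennreal (indicator {0..1} y * y powr (-a)) \<partial>lborel) = ennreal (1/(1-a))"
  proof -
    have "((\<lambda>y. y powr (-a)) has_integral (1 powr (-a+1) / (-a+1))) {0..1}"
      by (rule has_integral_powr_from_0) (use a in auto)
    then show ?thesis by (subst nn_integral_has_integral_lebesgue) auto
  qed
  have "(\<integral>\<^sup>+ p. ennreal (snd p powr (-a)) * indicator half_ball p \<partial>lborel)
       \<le> (\<integral>\<^sup>+ p. ennreal (indicator {0..1} (snd p) * snd p powr (-a)) * indicator {-1<..<1::real} (fst p) \<partial>lborel)"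
    by (intro nn_integral_mono) (auto simp: indicator_def dest: hb_bnds)
  also have "\<dots> = (\<integral>\<^sup>+ x. \<integral>\<^sup>+ y. ennreal (indicator {0..1} y * y powr (-a)) * indicator {-1<..<1::real} x \<partial>lborel \<partial>lborel)"
    using tonelli_fst[where f="\<lambda>p. ennreal (indicator {0..1} (snd p) * snd p powr (-a)) * indicator {-1<..<1::real} (fst p)"]
    by simp
  also have "\<dots> = (\<integral>\<^sup>+ x. ennreal (1/(1-a)) * indicator {-1<..<1::real} x \<partial>lborel)"
    by (intro nn_integral_cong) (simp add: nn_integral_multc inner)
  also have "\<dots> = ennreal (2/(1-a))"
  proof -
    have "ennreal (2/(1-a)) = ennreal (1/(1-a)) * ennreal 2"
      using a by (subst ennreal_mult[symmetric]) auto
    then show ?thesis by (simp add: nn_integral_cmult_indicator)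
  qed
  finally show ?thesis .
qed




lemma key_n:
  fixes u v g1 g2 :: "real\<times>real \<Rightarrow> 'e::euclidean_space" and T :: "real \<Rightarrow> 'e" and N :: "'e set"
  assumes c1: "c1fun u u'"
    and a0: "0 < a" and a1: "a < 1"
    and mv: "set_borel_measurable lborel half_ball v"
    and mg1: "set_borel_measurable lborel half_ball g1"
    and mg2: "set_borel_measurable lborel half_ball g2"
    and fin: "(\<integral>\<^sup>+ p\<in>half_ball. ennreal (snd p powr a * ((norm (v p))\<^sup>2 + (norm (g1 p))\<^sup>2 + (norm (g2 p))\<^sup>2)) \<partial>lborel) < \<infinity>"
    and en: "(\<integral>\<^sup>+ p\<in>half_ball. ennreal (snd p powr a * ((norm (u p - v p))\<^sup>2 + (norm (u' p (1,0) - g1 p))\<^sup>2 + (norm (u' p (0,1) - g2 p))\<^sup>2)) \<partial>lborel) < ennreal \<eta>"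
    and tn: "(\<integral>\<^sup>+ x\<in>{-1<..<1}. ennreal ((norm (u (x,0) - T x))\<^sup>2) \<partial>lborel) < ennreal \<eta>"
    and ae: "AE x in lborel. x \<in> {-1<..<1} \<longrightarrow> T x \<in> N"
    and ep: "0 < \<epsilon>" and dp: "0 < \<delta>" and hp: "0 < \<eta>"
  shows "infdist ((2/pi) *\<^sub>R (LINT p:half_ball|lborel. v p)) N \<le> \<delta>/2 + \<eta>/(2*\<delta>) + \<eta>/(2*\<epsilon>) + \<epsilon>*(2/(1-a))/2
     + 4*((LINT p:half_ball|lborel. snd p powr a * ((norm (g1 p))\<^sup>2 + (norm (g2 p))\<^sup>2))/(2*\<epsilon>) + \<eta>/(2*\<epsilon>) + 2*\<epsilon>*(2/(1-a)))"
proof -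
  interpret c1fun u u' by (rule c1)
  define M where "M = 2/(1-a)"
  have Mnn: "0 \<le> M" using a1 by (simp add: M_def)
  define w where "w p = snd p powr a" for p :: "real\<times>real"
  define V where "V p = indicator half_ball p *\<^sub>R v p" for p
  define G1 where "G1 p = indicator half_ball p *\<^sub>R g1 p" for p
  define G2 where "G2 p = indicator half_ball p *\<^sub>R g2 p" for p
  define E2 where "E2 = (LINT p:half_ball|lborel. snd p powr a * ((norm (g1 p))\<^sup>2 + (norm (g2 p))\<^sup>2))"
  define VB where "VB = (2/pi) *\<^sub>R (LINT p:half_ball|lborel. v p)"
  define UB where "UB = (2/pi) *\<^sub>R (LINT p:half_ball|lborel. u p)"
  have mV[measurable]: "V \<in> borel_measurable borel" using mv unfolding set_borel_measurable_def V_def[abs_def] by simp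
  have mG1[measurable]: "G1 \<in> borel_measurable borel" using mg1 unfolding set_borel_measurable_def G1_def[abs_def] by simp
  have mG2[measurable]: "G2 \<in> borel_measurable borel" using mg2 unfolding set_borel_measurable_def G2_def[abs_def] by simp
  have mw[measurable]: "w \<in> borel_measurable borel" unfolding w_def[abs_def] by measurable
  have wpos: "0 < w p" if "p \<in> half_ball" for p using that hb_bnds[OF that] by (simp add: w_def)
  have winv: "1 / w p = snd p powr (-a)" if "p \<in> half_ball" for p
    using hb_bnds[OF that] by (simp add: w_def powr_minus_divide)
  have Mint: "(\<integral>\<^sup>+ p. ennreal (snd p powr (-a)) * indicator half_ball p \<partial>lborel) \<le> ennreal M"
    unfolding M_def by (rule weight_int[OF a0 a1])
  have fin': "(\<integral>\<^sup>+ p. ennreal (w p * ((norm (V p))\<^sup>2 + (norm (G1 p))\<^sup>2 + (norm (G2 p))\<^sup>2)) * indicator half_ball p \<partial>lborel) < \<infinity>"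
  proof -
    have "(\<integral>\<^sup>+ p. ennreal (w p * ((norm (V p))\<^sup>2 + (norm (G1 p))\<^sup>2 + (norm (G2 p))\<^sup>2)) * indicator half_ball p \<partial>lborel)
        = (\<integral>\<^sup>+ p\<in>half_ball. ennreal (snd p powr a * ((norm (v p))\<^sup>2 + (norm (g1 p))\<^sup>2 + (norm (g2 p))\<^sup>2)) \<partial>lborel)"
      by (intro nn_integral_cong) (auto simp: indicator_def V_def G1_def G2_def w_def)
    then show ?thesis using fin by simp
  qed
  have en': "(\<integral>\<^sup>+ p. ennreal (w p * ((norm (u p - V p))\<^sup>2 + (norm (u' p (1,0) - G1 p))\<^sup>2 + (norm (u' p (0,1) - G2 p))\<^sup>2)) * indicator half_ball p \<partial>lborel) < ennreal \<eta>"
  proof -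
    have "(\<integral>\<^sup>+ p. ennreal (w p * ((norm (u p - V p))\<^sup>2 + (norm (u' p (1,0) - G1 p))\<^sup>2 + (norm (u' p (0,1) - G2 p))\<^sup>2)) * indicator half_ball p \<partial>lborel)
        = (\<integral>\<^sup>+ p\<in>half_ball. ennreal (snd p powr a * ((norm (u p - v p))\<^sup>2 + (norm (u' p (1,0) - g1 p))\<^sup>2 + (norm (u' p (0,1) - g2 p))\<^sup>2)) \<partial>lborel)"
      by (intro nn_integral_cong) (auto simp: indicator_def V_def G1_def G2_def w_def)
    then show ?thesis using en by simp
  qed
  have mu'x[measurable]: "(\<lambda>p. u' p (1,0)) \<in> borel_measurable borel"
    by (intro borel_measurable_continuous_onI Cx)
  have mu'y[measurable]: "(\<lambda>p. u' p (0,1)) \<in> borel_measurable borel"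
    by (intro borel_measurable_continuous_onI Cy)
  have iv: "set_integrable lborel half_ball v"
    unfolding set_integrable_def
  proof (rule integrableI_bounded)
    show "(\<lambda>x. indicator half_ball x *\<^sub>R v x) \<in> borel_measurable lborel"
      using mv unfolding set_borel_measurable_def by simp
    have "(\<integral>\<^sup>+ x. ennreal (norm (indicator half_ball x *\<^sub>R v x)) \<partial>lborel) = (\<integral>\<^sup>+ x. ennreal (norm (V x)) * indicator half_ball x \<partial>lborel)"
      by (intro nn_integral_cong) (auto simp: indicator_def V_def)
    also have "\<dots> \<le> (\<integral>\<^sup>+ x. ennreal (w x * ((norm (V x))\<^sup>2 + (norm (G1 x))\<^sup>2 + (norm (G2 x))\<^sup>2)) * indicator half_ball x
                          + ennreal (snd x powr (-a)) * indicator half_ball x \<partial>lborel)"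
    proof (intro nn_integral_mono)
      fix x :: "real\<times>real"
      show "ennreal (norm (V x)) * indicator half_ball x \<le> ennreal (w x * ((norm (V x))\<^sup>2 + (norm (G1 x))\<^sup>2 + (norm (G2 x))\<^sup>2)) * indicator half_ball x
                          + ennreal (snd x powr (-a)) * indicator half_ball x"
      proof (cases "x \<in> half_ball")
        case True
        have wx: "0 < w x" using wpos[OF True] .
        have "norm (V x) \<le> (1/(2*1)) * (w x * ((norm (V x))\<^sup>2 + (norm (G1 x))\<^sup>2 + (norm (G2 x))\<^sup>2)) + (1/2) * (1 / w x)"
          by (rule pw_A[OF wx]) auto
        also have "\<dots> \<le> w x * ((norm (V x))\<^sup>2 + (norm (G1 x))\<^sup>2 + (norm (G2 x))\<^sup>2) + snd x powr (-a)"
        proof -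
          have q: "0 \<le> w x * ((norm (V x))\<^sup>2 + (norm (G1 x))\<^sup>2 + (norm (G2 x))\<^sup>2)" using wx by simp
          have r: "0 \<le> snd x powr (-a)" by simp
          show ?thesis unfolding winv[OF True] using q r by linarith
        qed
        finally have "ennreal (norm (V x)) \<le> ennreal (w x * ((norm (V x))\<^sup>2 + (norm (G1 x))\<^sup>2 + (norm (G2 x))\<^sup>2) + snd x powr (-a))"
          by (rule ennreal_leI)
        also have "\<dots> = ennreal (w x * ((norm (V x))\<^sup>2 + (norm (G1 x))\<^sup>2 + (norm (G2 x))\<^sup>2)) + ennreal (snd x powr (-a))"
          using wx by (intro ennreal_plus) auto
        finally show ?thesis using True by simp
      qed simp
    qed
    also have "\<dots> = (\<integral>\<^sup>+ x. ennreal (w x * ((norm (V x))\<^sup>2 + (norm (G1 x))\<^sup>2 + (norm (G2 x))\<^sup>2)) * indicator half_ball x \<partial>lborel)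
                   + (\<integral>\<^sup>+ x. ennreal (snd x powr (-a)) * indicator half_ball x \<partial>lborel)"
      by (rule nn_integral_add) auto
    also have "\<dots> < \<infinity>" using fin' le_less_trans[OF Mint ennreal_less_top] by (simp add: ennreal_add_less_top)
    finally show "(\<integral>\<^sup>+ x. ennreal (norm (indicator half_ball x *\<^sub>R v x)) \<partial>lborel) < \<infinity>" .
  qed
  have iu: "set_integrable lborel half_ball u" by (rule cont_set_integrable[OF cont_u])
  have ieq: "(\<integral>\<^sup>+ p. ennreal (w p * ((norm (u p - V p))\<^sup>2 + (norm (u' p (1,0) - G1 p))\<^sup>2 + (norm (u' p (0,1) - G2 p))\<^sup>2)) * indicator half_ball p \<partial>lborel)
      \<le> ennreal \<eta>" using en' by simp
  define L where "L = (LINT p|lborel. norm (indicator half_ball p *\<^sub>R (v p - u p)))"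
  have ivu: "set_integrable lborel half_ball (\<lambda>p. v p - u p)" using iv iu by (rule set_integral_diff)
  have L_bound: "L \<le> \<eta>/(2*\<epsilon>) + \<epsilon>*M/2"
  proof -
    have "ennreal L = (\<integral>\<^sup>+ p. ennreal (norm (indicator half_ball p *\<^sub>R (v p - u p))) \<partial>lborel)"
      unfolding L_def using integrable_norm[OF ivu[unfolded set_integrable_def]]
      by (intro nn_integral_eq_integral[symmetric]) auto
    also have "\<dots> = (\<integral>\<^sup>+ p. ennreal (norm (u p - V p)) * indicator half_ball p \<partial>lborel)"
      by (intro nn_integral_cong) (auto simp: indicator_def V_def norm_minus_commute)
    also have "\<dots> \<le> (\<integral>\<^sup>+ p. ennreal (1/(2*\<epsilon>)) * (ennreal (w p * ((norm (u p - V p))\<^sup>2 + (norm (u' p (1,0) - G1 p))\<^sup>2 + (norm (u' p (0,1) - G2 p))\<^sup>2)) * indicator half_ball p)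
         + ennreal (\<epsilon>/2) * (ennreal (snd p powr (-a)) * indicator half_ball p) \<partial>lborel)"
    proof (intro nn_integral_mono)
      fix x :: "real\<times>real"
      show "ennreal (norm (u x - V x)) * indicator half_ball x \<le> ennreal (1/(2*\<epsilon>)) * (ennreal (w x * ((norm (u x - V x))\<^sup>2 + (norm (u' x (1,0) - G1 x))\<^sup>2 + (norm (u' x (0,1) - G2 x))\<^sup>2)) * indicator half_ball x)
         + ennreal (\<epsilon>/2) * (ennreal (snd x powr (-a)) * indicator half_ball x)"
      proof (cases "x \<in> half_ball")
        case True
        have wx: "0 < w x" using wpos[OF True] .
        have "norm (u x - V x) \<le> (1/(2*\<epsilon>)) * (w x * ((norm (u x - V x))\<^sup>2 + (norm (u' x (1,0) - G1 x))\<^sup>2 + (norm (u' x (0,1) - G2 x))\<^sup>2)) + (\<epsilon>/2) * (1 / w x)"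
          by (rule pw_A[OF wx ep]) auto
        then have "ennreal (norm (u x - V x)) \<le> ennreal ((1/(2*\<epsilon>)) * (w x * ((norm (u x - V x))\<^sup>2 + (norm (u' x (1,0) - G1 x))\<^sup>2 + (norm (u' x (0,1) - G2 x))\<^sup>2)) + (\<epsilon>/2) * (snd x powr (-a)))"
          unfolding winv[OF True] by (rule ennreal_leI)
        also have "\<dots> = ennreal ((1/(2*\<epsilon>)) * (w x * ((norm (u x - V x))\<^sup>2 + (norm (u' x (1,0) - G1 x))\<^sup>2 + (norm (u' x (0,1) - G2 x))\<^sup>2))) + ennreal ((\<epsilon>/2) * (snd x powr (-a)))"
          using wx ep by (intro ennreal_plus) auto
        also have "\<dots> = ennreal (1/(2*\<epsilon>)) * ennreal (w x * ((norm (u x - V x))\<^sup>2 + (norm (u' x (1,0) - G1 x))\<^sup>2 + (norm (u' x (0,1) - G2 x))\<^sup>2)) + ennreal (\<epsilon>/2) * ennreal (snd x powr (-a))"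
          by (subst (1 2) ennreal_mult') (use ep in auto)
        finally show ?thesis using True by simp
      qed simp
    qed
    also have "\<dots> = ennreal (1/(2*\<epsilon>)) * (\<integral>\<^sup>+ p. ennreal (w p * ((norm (u p - V p))\<^sup>2 + (norm (u' p (1,0) - G1 p))\<^sup>2 + (norm (u' p (0,1) - G2 p))\<^sup>2)) * indicator half_ball p \<partial>lborel)
         + ennreal (\<epsilon>/2) * (\<integral>\<^sup>+ p. ennreal (snd p powr (-a)) * indicator half_ball p \<partial>lborel)"
      by (simp add: nn_integral_add nn_integral_cmult)
    also have "\<dots> \<le> ennreal (1/(2*\<epsilon>)) * ennreal \<eta> + ennreal (\<epsilon>/2) * ennreal M"
      using ieq Mint by (intro add_mono mult_left_mono) auto
    also have "\<dots> = ennreal ((1/(2*\<epsilon>)) * \<eta>) + ennreal ((\<epsilon>/2) * M)"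
      by (subst (1 2) ennreal_mult') (use ep in auto)
    also have "\<dots> = ennreal ((1/(2*\<epsilon>)) * \<eta> + (\<epsilon>/2) * M)"
      using ep hp Mnn by (intro ennreal_plus[symmetric]) auto
    finally have "ennreal L \<le> ennreal ((1/(2*\<epsilon>)) * \<eta> + (\<epsilon>/2) * M)" .
    then have "L \<le> (1/(2*\<epsilon>)) * \<eta> + (\<epsilon>/2) * M"
      using ep hp Mnn by (subst (asm) ennreal_le_iff) auto
    then show ?thesis by simp
  qed
  have Abar: "norm (VB - UB) \<le> \<eta>/(2*\<epsilon>) + \<epsilon>*M/2"
  proof -
    have "VB - UB = (2/pi) *\<^sub>R (LINT p:half_ball|lborel. v p - u p)"
      unfolding VB_def UB_def by (simp add: set_integral_diff[OF iv iu] scaleR_diff_right)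
    then have "norm (VB - UB) = (2/pi) * norm (LINT p:half_ball|lborel. v p - u p)" by simp
    also have "\<dots> \<le> 1 * norm (LINT p:half_ball|lborel. v p - u p)"
      by (intro mult_right_mono) (auto simp: pi_ge_two)
    also have "norm (LINT p:half_ball|lborel. v p - u p) \<le> L"
      unfolding L_def set_lebesgue_integral_def by (rule integral_norm_bound)
    finally show ?thesis using L_bound by simp
  qed
  define J where "J = (\<integral>\<^sup>+ p. ennreal (w p * ((norm (G1 p))\<^sup>2 + (norm (G2 p))\<^sup>2)) * indicator half_ball p \<partial>lborel)"
  have E2nn: "0 \<le> E2" unfolding E2_def set_lebesgue_integral_def
    by (intro Bochner_Integration.integral_nonneg) (auto simp: indicator_def)
  have J_E2: "J = ennreal E2"
  proof -
    have Jfin: "J < \<infinity>"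
    proof -
      have "J \<le> (\<integral>\<^sup>+ p. ennreal (w p * ((norm (V p))\<^sup>2 + (norm (G1 p))\<^sup>2 + (norm (G2 p))\<^sup>2)) * indicator half_ball p \<partial>lborel)"
        unfolding J_def
      proof (intro nn_integral_mono)
        fix x :: "real\<times>real"
        show "ennreal (w x * ((norm (G1 x))\<^sup>2 + (norm (G2 x))\<^sup>2)) * indicator half_ball x \<le> ennreal (w x * ((norm (V x))\<^sup>2 + (norm (G1 x))\<^sup>2 + (norm (G2 x))\<^sup>2)) * indicator half_ball x"
        proof (cases "x \<in> half_ball")
          case True
          have wx: "0 < w x" using wpos[OF True] .
          have "w x * ((norm (G1 x))\<^sup>2 + (norm (G2 x))\<^sup>2) \<le> w x * ((norm (V x))\<^sup>2 + (norm (G1 x))\<^sup>2 + (norm (G2 x))\<^sup>2)"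
            using wx by (intro mult_left_mono) auto
          then show ?thesis using True by (auto intro: ennreal_leI)
        qed simp
      qed
      then show ?thesis using fin' by (simp add: le_less_trans)
    qed
    have "E2 = (LINT p|lborel. indicator half_ball p * (w p * ((norm (G1 p))\<^sup>2 + (norm (G2 p))\<^sup>2)))"
      unfolding E2_def set_lebesgue_integral_def
      by (intro Bochner_Integration.integral_cong) (auto simp: indicator_def G1_def G2_def w_def)
    also have "\<dots> = enn2real (\<integral>\<^sup>+ p. ennreal (indicator half_ball p * (w p * ((norm (G1 p))\<^sup>2 + (norm (G2 p))\<^sup>2))) \<partial>lborel)"
      by (rule integral_eq_nn_integral) (auto intro!: mult_nonneg_nonneg simp: w_def)
    also have "(\<integral>\<^sup>+ p. ennreal (indicator half_ball p * (w p * ((norm (G1 p))\<^sup>2 + (norm (G2 p))\<^sup>2))) \<partial>lborel) = J"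
      unfolding J_def by (intro nn_integral_cong) (auto simp: indicator_def)
    finally show ?thesis using Jfin by simp
  qed
  have Grad: "(\<integral>\<^sup>+ p. ennreal (gx p + gy p) * indicator half_ball p \<partial>lborel) \<le> ennreal (E2/(2*\<epsilon>) + \<eta>/(2*\<epsilon>) + 2*\<epsilon>*M)"
  proof -
    have "(\<integral>\<^sup>+ p. ennreal (gx p + gy p) * indicator half_ball p \<partial>lborel)
      \<le> (\<integral>\<^sup>+ p. ennreal (1/(2*\<epsilon>)) * (ennreal (w p * ((norm (G1 p))\<^sup>2 + (norm (G2 p))\<^sup>2)) * indicator half_ball p)
         + ennreal (1/(2*\<epsilon>)) * (ennreal (w p * ((norm (u p - V p))\<^sup>2 + (norm (u' p (1,0) - G1 p))\<^sup>2 + (norm (u' p (0,1) - G2 p))\<^sup>2)) * indicator half_ball p)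
         + ennreal (2*\<epsilon>) * (ennreal (snd p powr (-a)) * indicator half_ball p) \<partial>lborel)"
    proof (intro nn_integral_mono)
      fix x :: "real\<times>real"
      show "ennreal (gx x + gy x) * indicator half_ball x \<le> ennreal (1/(2*\<epsilon>)) * (ennreal (w x * ((norm (G1 x))\<^sup>2 + (norm (G2 x))\<^sup>2)) * indicator half_ball x)
         + ennreal (1/(2*\<epsilon>)) * (ennreal (w x * ((norm (u x - V x))\<^sup>2 + (norm (u' x (1,0) - G1 x))\<^sup>2 + (norm (u' x (0,1) - G2 x))\<^sup>2)) * indicator half_ball x)
         + ennreal (2*\<epsilon>) * (ennreal (snd x powr (-a)) * indicator half_ball x)"
      proof (cases "x \<in> half_ball")
        case True
        have wx: "0 < w x" using wpos[OF True] .
        have "gx x + gy x \<le> (1/(2*\<epsilon>)) * (w x * ((norm (G1 x))\<^sup>2 + (norm (G2 x))\<^sup>2))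
           + (1/(2*\<epsilon>)) * (w x * ((norm (u x - V x))\<^sup>2 + (norm (u' x (1,0) - G1 x))\<^sup>2 + (norm (u' x (0,1) - G2 x))\<^sup>2)) + (2*\<epsilon>) * (1 / w x)"
          unfolding gx_def gy_def by (rule pw_G[OF wx ep])
        then have "ennreal (gx x + gy x) \<le> ennreal ((1/(2*\<epsilon>)) * (w x * ((norm (G1 x))\<^sup>2 + (norm (G2 x))\<^sup>2))
           + (1/(2*\<epsilon>)) * (w x * ((norm (u x - V x))\<^sup>2 + (norm (u' x (1,0) - G1 x))\<^sup>2 + (norm (u' x (0,1) - G2 x))\<^sup>2)) + (2*\<epsilon>) * (snd x powr (-a)))"
          unfolding winv[OF True] by (rule ennreal_leI)
        also have "\<dots> = ennreal ((1/(2*\<epsilon>)) * (w x * ((norm (G1 x))\<^sup>2 + (norm (G2 x))\<^sup>2)))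
           + ennreal ((1/(2*\<epsilon>)) * (w x * ((norm (u x - V x))\<^sup>2 + (norm (u' x (1,0) - G1 x))\<^sup>2 + (norm (u' x (0,1) - G2 x))\<^sup>2))) + ennreal ((2*\<epsilon>) * (snd x powr (-a)))"
          using wx ep by (subst ennreal_plus, force, force, subst ennreal_plus) auto
        also have "\<dots> = ennreal (1/(2*\<epsilon>)) * ennreal (w x * ((norm (G1 x))\<^sup>2 + (norm (G2 x))\<^sup>2))
           + ennreal (1/(2*\<epsilon>)) * ennreal (w x * ((norm (u x - V x))\<^sup>2 + (norm (u' x (1,0) - G1 x))\<^sup>2 + (norm (u' x (0,1) - G2 x))\<^sup>2)) + ennreal (2*\<epsilon>) * ennreal (snd x powr (-a))"
          by (subst (1 2 3) ennreal_mult') (use ep in auto)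
        finally show ?thesis using True by simp
      qed simp
    qed
    also have "\<dots> = ennreal (1/(2*\<epsilon>)) * J
         + ennreal (1/(2*\<epsilon>)) * (\<integral>\<^sup>+ p. ennreal (w p * ((norm (u p - V p))\<^sup>2 + (norm (u' p (1,0) - G1 p))\<^sup>2 + (norm (u' p (0,1) - G2 p))\<^sup>2)) * indicator half_ball p \<partial>lborel)
         + ennreal (2*\<epsilon>) * (\<integral>\<^sup>+ p. ennreal (snd p powr (-a)) * indicator half_ball p \<partial>lborel)"
      unfolding J_def by (simp add: nn_integral_add nn_integral_cmult)
    also have "\<dots> \<le> ennreal (1/(2*\<epsilon>)) * ennreal E2 + ennreal (1/(2*\<epsilon>)) * ennreal \<eta> + ennreal (2*\<epsilon>) * ennreal M"
      using ieq Mint J_E2 by (intro add_mono mult_left_mono) auto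
    also have "\<dots> = ennreal ((1/(2*\<epsilon>)) * E2) + ennreal ((1/(2*\<epsilon>)) * \<eta>) + ennreal ((2*\<epsilon>) * M)"
      by (subst (1 2 3) ennreal_mult') (use ep in auto)
    also have "\<dots> = ennreal ((1/(2*\<epsilon>)) * E2 + (1/(2*\<epsilon>)) * \<eta> + (2*\<epsilon>) * M)"
      using ep hp Mnn E2nn by (subst ennreal_plus[symmetric], force, force, subst ennreal_plus[symmetric]) auto
    finally show ?thesis by simp
  qed
  define D where "D = infdist VB N"
  define Ab where "Ab = norm (VB - UB)"
  define B where "B x = norm (UB - u (x,0))" for x
  define Z where "Z x = D - \<delta>/2 - Ab - B x" for x
  define I where "I = {-1/2<..<1/2::real}"
  have cu0: "continuous_on UNIV (\<lambda>x::real. u (x,0))"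
    by (rule continuous_on_compose2[OF cont_u]) (auto intro!: continuous_intros)
  have mB[measurable]: "B \<in> borel_measurable borel"
    unfolding B_def[abs_def] by (intro borel_measurable_continuous_onI continuous_intros cu0)
  have mZ[measurable]: "Z \<in> borel_measurable borel" unfolding Z_def[abs_def] by measurable
  have mI[measurable]: "I \<in> sets borel" unfolding I_def by simp
  have AEZ: "AE x in lborel. ennreal (2*\<delta> * Z x) * indicator I x \<le> ennreal ((norm (u (x,0) - T x))\<^sup>2) * indicator {-1<..<1::real} x"
    using ae
  proof eventually_elim
    case (elim x)
    show ?case
    proof (cases "x \<in> I")
      case True
      then have x1: "x \<in> {-1<..<1}" by (auto simp: I_def)
      with elim have TN: "T x \<in> N" by simp
      define r where "r = norm (u (x,0) - T x)"
      have "D \<le> dist VB (T x)" unfolding D_def by (rule infdist_le[OF TN])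
      also have "dist VB (T x) \<le> Ab + B x + r"
        unfolding dist_norm Ab_def B_def r_def
        by (smt (verit) norm_triangle_ineq diff_add_cancel add_diff_eq)
      finally have D1: "D \<le> Ab + B x + r" .
      have "r \<le> 1*r\<^sup>2/(2*\<delta>) + \<delta>/(2*1)" by (rule amgm) (use dp in auto)
      with D1 have "2*\<delta> * Z x \<le> 2*\<delta> * (r\<^sup>2/(2*\<delta>))"
        unfolding Z_def using dp by (intro mult_left_mono) auto
      also have "\<dots> = r\<^sup>2" using dp by simp
      finally have "ennreal (2*\<delta> * Z x) \<le> ennreal ((norm (u (x,0) - T x))\<^sup>2)"
        unfolding r_def by (rule ennreal_leI)
      then show ?thesis using True x1 by simp
    qed simp
  qed
  define IZ where "IZ = (\<integral>\<^sup>+ x. ennreal (Z x) * indicator I x \<partial>lborel)"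
  have "ennreal (2*\<delta>) * IZ = (\<integral>\<^sup>+ x. ennreal (2*\<delta> * Z x) * indicator I x \<partial>lborel)"
    unfolding IZ_def using dp by (subst nn_integral_cmult[symmetric]) (auto simp: ennreal_mult' mult.assoc)
  also have "\<dots> \<le> (\<integral>\<^sup>+ x\<in>{-1<..<1::real}. ennreal ((norm (u (x,0) - T x))\<^sup>2) \<partial>lborel)"
    by (rule nn_integral_mono_AE[OF AEZ])
  also have "\<dots> \<le> ennreal \<eta>" using tn by simp
  finally have IZ2: "ennreal (2*\<delta>) * IZ \<le> ennreal \<eta>" .
  have IZb: "IZ \<le> ennreal (\<eta>/(2*\<delta>))"
  proof -
    have "IZ = ennreal (1/(2*\<delta>)) * (ennreal (2*\<delta>) * IZ)"
    proof -
      have "ennreal (1/(2*\<delta>)) * ennreal (2*\<delta>) = 1" using dp by (simp add: ennreal_mult[symmetric])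
      then show ?thesis by (simp add: mult.assoc[symmetric])
    qed
    also have "\<dots> \<le> ennreal (1/(2*\<delta>)) * ennreal \<eta>" using IZ2 by (rule mult_left_mono) simp
    also have "\<dots> = ennreal ((1/(2*\<delta>)) * \<eta>)" by (subst ennreal_mult') (use dp in auto)
    also have "\<dots> = ennreal (\<eta>/(2*\<delta>))" by simp
    finally show ?thesis .
  qed
  have IB: "(\<integral>\<^sup>+ x. ennreal (B x) * indicator I x \<partial>lborel) \<le> 4 * ennreal (E2/(2*\<epsilon>) + \<eta>/(2*\<epsilon>) + 2*\<epsilon>*M)"
  proof -
    have "(\<integral>\<^sup>+ x. ennreal (B x) * indicator I x \<partial>lborel) \<le> 4 * (\<integral>\<^sup>+ p. ennreal (gx p + gy p) * indicator half_ball p \<partial>lborel)"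
      using core unfolding B_def I_def UB_def .
    also have "\<dots> \<le> 4 * ennreal (E2/(2*\<epsilon>) + \<eta>/(2*\<epsilon>) + 2*\<epsilon>*M)"
      using Grad by (rule mult_left_mono) simp
    finally show ?thesis .
  qed
  define K0 where "K0 = D - \<delta>/2 - Ab"
  have "ennreal K0 = (\<integral>\<^sup>+ x. ennreal K0 * indicator I x \<partial>lborel)"
    by (simp add: nn_integral_cmult_indicator I_def)
  also have "\<dots> \<le> (\<integral>\<^sup>+ x. ennreal (Z x) * indicator I x + ennreal (B x) * indicator I x \<partial>lborel)"
  proof (intro nn_integral_mono)
    fix x
    have Bn: "0 \<le> B x" unfolding B_def by simp
    have "ennreal K0 \<le> ennreal (Z x) + ennreal (B x)"
    proof (cases "0 \<le> Z x")
      case True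
      then have "ennreal K0 = ennreal (Z x) + ennreal (B x)"
        using Bn unfolding K0_def Z_def by (subst ennreal_plus[symmetric]) auto
      then show ?thesis by simp
    next
      case False
      then have "ennreal K0 \<le> ennreal (B x)" unfolding K0_def Z_def by (intro ennreal_leI) auto
      then show ?thesis by (simp add: add_increasing)
    qed
    then show "ennreal K0 * indicator I x \<le> ennreal (Z x) * indicator I x + ennreal (B x) * indicator I x"
      by (auto simp: indicator_def)
  qed
  also have "\<dots> = IZ + (\<integral>\<^sup>+ x. ennreal (B x) * indicator I x \<partial>lborel)"
    unfolding IZ_def by (rule nn_integral_add) auto
  also have "\<dots> \<le> ennreal (\<eta>/(2*\<delta>)) + 4 * ennreal (E2/(2*\<epsilon>) + \<eta>/(2*\<epsilon>) + 2*\<epsilon>*M)"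
    using IZb IB by (rule add_mono)
  also have "\<dots> = ennreal (\<eta>/(2*\<delta>) + 4 * (E2/(2*\<epsilon>) + \<eta>/(2*\<epsilon>) + 2*\<epsilon>*M))"
  proof -
    have S0: "0 \<le> E2/(2*\<epsilon>) + \<eta>/(2*\<epsilon>) + 2*\<epsilon>*M" using ep hp Mnn E2nn by simp
    have "4 * ennreal (E2/(2*\<epsilon>) + \<eta>/(2*\<epsilon>) + 2*\<epsilon>*M) = ennreal (4 * (E2/(2*\<epsilon>) + \<eta>/(2*\<epsilon>) + 2*\<epsilon>*M))"
      by (subst ennreal_mult') auto
    then show ?thesis using S0 dp hp by (simp only:) (rule ennreal_plus[symmetric]; auto)
  qed
  finally have "K0 \<le> \<eta>/(2*\<delta>) + 4 * (E2/(2*\<epsilon>) + \<eta>/(2*\<epsilon>) + 2*\<epsilon>*M)"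
    using dp ep hp Mnn E2nn by (subst (asm) ennreal_le_iff) auto
  then have "D \<le> \<delta>/2 + \<eta>/(2*\<delta>) + \<eta>/(2*\<epsilon>) + \<epsilon>*M/2 + 4*(E2/(2*\<epsilon>) + \<eta>/(2*\<epsilon>) + 2*\<epsilon>*M)"
    using Abar unfolding K0_def Ab_def by linarith
  then show ?thesis unfolding D_def VB_def E2_def M_def .
qed




theorem lemma3p5:
  fixes s :: real
  assumes "0 < s" and "s < 1/2"
  shows "\<exists>C::real. \<forall>(N::'e::euclidean_space set) v g1 g2 T.
           compact N \<and> smooth_submanifold N \<and>
           weighted_H1 (1 - 2 * s) v g1 g2 \<and> has_trace (1 - 2 * s) v g1 g2 T \<and>
           (AE x in lborel. x \<in> {-1<..<1} \<longrightarrow> T x \<in> N) \<longrightarrow>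
           infdist ((2/pi) *\<^sub>R (LINT p:half_ball|lborel. v p)) N
             \<le> C * sqrt (energy_s (1 - 2 * s) g1 g2)"
proof -
  have a0: "0 < 1 - 2 * s" and a1: "1 - 2 * s < 1" using assms by auto
  define M where "M = 2/(1-(1-2 * s))"
  have Mnn: "0 \<le> M" using assms by (simp add: M_def)
  define c1 where "c1 = 3 + 9*M"
  have c1p: "0 < c1" using Mnn by (simp add: c1_def)
  show ?thesis
  proof (rule exI[of _ "c1 + 4"], intro allI impI)
    fix N :: "'e set" and v g1 g2 :: "real\<times>real \<Rightarrow> 'e" and T :: "real \<Rightarrow> 'e"
    assume H: "compact N \<and> smooth_submanifold N \<and>
           weighted_H1 (1 - 2 * s) v g1 g2 \<and> has_trace (1 - 2 * s) v g1 g2 T \<and>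
           (AE x in lborel. x \<in> {-1<..<1} \<longrightarrow> T x \<in> N)"
    define E2 where "E2 = (LINT p:half_ball|lborel. snd p powr (1-2 * s) * ((norm (g1 p))\<^sup>2 + (norm (g2 p))\<^sup>2))"
    have E2nn: "0 \<le> E2" unfolding E2_def set_lebesgue_integral_def
      by (intro Bochner_Integration.integral_nonneg) (auto simp: indicator_def)
    have EE: "energy_s (1 - 2 * s) g1 g2 = E2/2" unfolding energy_s_def E2_def by simp
    define D where "D = infdist ((2/pi) *\<^sub>R (LINT p:half_ball|lborel. v p)) N"
    from H have ae: "AE x in lborel. x \<in> {-1<..<1} \<longrightarrow> T x \<in> N" by blast
    from H have wH: "weighted_H1 (1 - 2 * s) v g1 g2" by blast
    then have mv: "set_borel_measurable lborel half_ball v" and mg1: "set_borel_measurable lborel half_ball g1"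
      and mg2: "set_borel_measurable lborel half_ball g2"
      and fin: "(\<integral>\<^sup>+ p\<in>half_ball. ennreal (snd p powr (1 - 2 * s) * ((norm (v p))\<^sup>2 + (norm (g1 p))\<^sup>2 + (norm (g2 p))\<^sup>2)) \<partial>lborel) < \<infinity>"
      unfolding weighted_H1_def by blast+
    from H have "has_trace (1 - 2 * s) v g1 g2 T" by blast
    then obtain u :: "nat \<Rightarrow> real\<times>real \<Rightarrow> 'e" where us: "\<And>n. smooth_on UNIV (u n)"
      and lim1: "(\<lambda>n. \<integral>\<^sup>+ p\<in>half_ball. ennreal (snd p powr (1-2 * s) *
            ((norm (u n p - v p))\<^sup>2 + (norm (dx (u n) p - g1 p))\<^sup>2 + (norm (dy (u n) p - g2 p))\<^sup>2))
            \<partial>lborel) \<longlonglongrightarrow> 0"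
      and lim2: "(\<lambda>n. \<integral>\<^sup>+ x\<in>{-1<..<1}. ennreal ((norm (u n (x, 0) - T x))\<^sup>2) \<partial>lborel) \<longlonglongrightarrow> 0"
      unfolding has_trace_def by blast
    have key: "D \<le> c1*\<epsilon> + 2*E2/\<epsilon>" if ep: "0 < \<epsilon>" for \<epsilon>
    proof (rule field_le_epsilon)
      fix \<delta> :: real assume dp: "0 < \<delta>"
      define \<eta> where "\<eta> = min (\<delta>\<^sup>2) (\<epsilon>\<^sup>2)"
      have hp: "0 < \<eta>" using dp ep by (simp add: \<eta>_def)
      have ev1: "eventually (\<lambda>n. (\<integral>\<^sup>+ p\<in>half_ball. ennreal (snd p powr (1-2 * s) *
            ((norm (u n p - v p))\<^sup>2 + (norm (dx (u n) p - g1 p))\<^sup>2 + (norm (dy (u n) p - g2 p))\<^sup>2))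
            \<partial>lborel) < ennreal \<eta>) sequentially"
        using order_tendstoD(2)[OF lim1] hp by simp
      have ev2: "eventually (\<lambda>n. (\<integral>\<^sup>+ x\<in>{-1<..<1}. ennreal ((norm (u n (x, 0) - T x))\<^sup>2) \<partial>lborel) < ennreal \<eta>) sequentially"
        using order_tendstoD(2)[OF lim2] hp by simp
      obtain n where n1: "(\<integral>\<^sup>+ p\<in>half_ball. ennreal (snd p powr (1-2 * s) *
            ((norm (u n p - v p))\<^sup>2 + (norm (dx (u n) p - g1 p))\<^sup>2 + (norm (dy (u n) p - g2 p))\<^sup>2))
            \<partial>lborel) < ennreal \<eta>"
        and n2: "(\<integral>\<^sup>+ x\<in>{-1<..<1}. ennreal ((norm (u n (x, 0) - T x))\<^sup>2) \<partial>lborel) < ennreal \<eta>"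
        using eventually_conj[OF ev1 ev2] unfolding eventually_sequentially by blast
      obtain u' where c1f: "c1fun (u n) u'" and ddx: "\<And>p. dx (u n) p = u' p (1,0)" and ddy: "\<And>p. dy (u n) p = u' p (0,1)"
        using smooth_c1[OF us[of n]] by blast
      have R: "D \<le> \<delta>/2 + \<eta>/(2*\<delta>) + \<eta>/(2*\<epsilon>) + \<epsilon>*M/2 + 4*(E2/(2*\<epsilon>) + \<eta>/(2*\<epsilon>) + 2*\<epsilon>*M)"
        unfolding D_def E2_def M_def
        by (rule key_n[OF c1f a0 a1 mv mg1 mg2 fin n1[unfolded ddx ddy] n2 ae ep dp hp])
      have h1: "\<eta>/(2*\<delta>) \<le> \<delta>/2"
      proof -
        have "\<eta>/(2*\<delta>) \<le> \<delta>\<^sup>2/(2*\<delta>)" using dp by (intro divide_right_mono) (auto simp: \<eta>_def)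
        also have "\<dots> = \<delta>/2" using dp by (simp add: power2_eq_square)
        finally show ?thesis .
      qed
      have h2: "\<eta>/(2*\<epsilon>) \<le> \<epsilon>/2"
      proof -
        have "\<eta>/(2*\<epsilon>) \<le> \<epsilon>\<^sup>2/(2*\<epsilon>)" using ep by (intro divide_right_mono) (auto simp: \<eta>_def)
        also have "\<dots> = \<epsilon>/2" using ep by (simp add: power2_eq_square)
        finally show ?thesis .
      qed
      have eq1: "4*(E2/(2*\<epsilon>) + \<eta>/(2*\<epsilon>) + 2*\<epsilon>*M) = 2*E2/\<epsilon> + 4*(\<eta>/(2*\<epsilon>)) + 8*(\<epsilon>*M)"
        using ep by (simp add: field_simps)
      have eq2: "c1*\<epsilon> = 3*\<epsilon> + 9*(\<epsilon>*M)" by (simp add: c1_def algebra_simps)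
      have eq3: "\<epsilon>*M/2 = (\<epsilon>*M)/2" by simp
      have "0 \<le> \<epsilon>*M" using ep Mnn by simp
      then show "D \<le> c1*\<epsilon> + 2*E2/\<epsilon> + \<delta>" using R h1 h2 eq1 eq2 eq3 ep by linarith
    qed
    show "infdist ((2/pi) *\<^sub>R (LINT p:half_ball|lborel. v p)) N \<le> (c1 + 4) * sqrt (energy_s (1 - 2 * s) g1 g2)"
    proof (cases "E2 = 0")
      case True
      have "D \<le> 0"
      proof (rule field_le_epsilon)
        fix e :: real assume e: "0 < e"
        have "D \<le> c1*(e/c1) + 2*E2/(e/c1)" using key[of "e/c1"] e c1p by simp
        then show "D \<le> 0 + e" using True c1p by simp
      qed
      then show ?thesis unfolding D_def EE True by simp
    next
      case False
      then have Ep: "0 < E2/2" using E2nn by simp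
      define e where "e = sqrt (E2/2)"
      have e0: "0 < e" using Ep by (simp add: e_def)
      have "D \<le> c1*e + 2*E2/e" using key[OF e0] .
      also have "2*E2/e = 4 * ((E2/2)/sqrt (E2/2))" unfolding e_def by simp
      also have "(E2/2)/sqrt (E2/2) = e" unfolding e_def by (rule real_div_sqrt) (use Ep in simp)
      finally have "D \<le> (c1 + 4) * e" by (simp add: algebra_simps)
      then show ?thesis unfolding D_def EE e_def .
    qed
  qed
qed


end
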